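(* Assume (A1)–(A3) below, and let $\mathbf{a}_\star$ be the unique solution of $\mathrm{VI}(\mathbb{A},\mathbb{F})$. Let $\mathbb{F}^{\mathrm{nor}}=\mathbb{F}\circ P_{\mathbb{A}}+\mathrm{Id}-P_{\mathbb{A}}$ be the normal map, and $\tilde{\mathbf{a}}_\star=\mathbf{a}_\star-\mathbb{F}(\mathbf{a}_\star)$. Then the index of $\mathbb{F}^{\mathrm{nor}}$ at $\tilde{\mathbf{a}}_\star$ equals $1$: $\operatorname{ind}(\mathbb{F}^{\mathrm{nor}},\tilde{\mathbf{a}}_\star)=1$.
   Context: Setting. $(\Omega,\mathcal{F},\mathbb{P})$ is a probability space; $N,d\in\mathbb{N}_+$, $R>0$, $\lambda>0$. $\mathcal{X}\subseteq\mathbb{R}^{n_x}$, $\mathcal{Y}\subseteq\mathbb{R}^{n_y}$ are compact; $X:\Omega\to\mathcal{X}$, $Y:\Omega\to\mathcal{Y}$ are random variables. $\phi_1,\dots,\phi_d$ are continuous on $\mathcal{X}$, $\Phi^d(x)=[\phi_l(x)]_{l=1}^d$. $\mathbb{B}_R=\{a\in\mathbb{R}^d:\|a\|_2<R\}$ and $\operatorname{cl}\mathbb{B}_R$ its closure. A profile $\mathbf{a}=[a^1;\dots;a^N]\in\mathbb{R}^{Nd}$, $a^i\in\mathbb{R}^d$, defines $\hat z^i(x)=\sum_l a^i_l\phi_l(x)$ and $\hat z^{-i}(x)$ (stack over $j\neq i$). $\hat{\mathcal{Z}}^i=\bigcup\{\hat z^i(\mathcal{X}):a^i\in\operatorname{cl}\mathbb{B}_R\}$,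 $\hat{\mathcal{Z}}=\prod_i\hat{\mathcal{Z}}^i$. Player $i$ has objective $J^i(z^i;y,z^{-i})$ (derivative $\partial J^i$ in $z^i$) and constraint $h^i:\hat{\mathcal{Z}}^i\times\mathcal{Y}\to\mathbb{R}$. $F(z;y)=[\partial J^i(z^i;y,z^{-i})]_i$; $\mathbf{F}(\mathbf{a};x,y)=[\partial J^i(\hat z^i(x);y,\hat z^{-i}(x))\Phi^d(x)]_i$; $\mathbb{F}(\mathbf{a})=\mathbb{E}[\mathbf{F}(\mathbf{a};X,Y)]+\lambda\mathbf{a}$; $\bar h^i(a^i)=\mathbb{E}[h^i(\hat z^i(X);Y)]$. $\mathbb{A}^i=\{a^i\in\operatorname{cl}\mathbb{B}_R:\bar h^i(a^i)\le0\}$, $\mathbb{A}=\prod_i\mathbb{A}^i$. $P_K$ is Euclidean projection onto a closed convex set $K$. $\mathrm{VI}(K,G)$ asks for $\mathbf{a}^*\in K$ with $\langle G(\mathbf{a}^* ),\mathbf{a}-\mathbf{a}^*\rangle\ge0$ for all $\mathbf{a}\in K$. For a continuous $f:\mathbb{R}^m\to\mathbb{R}^m$ and an isolated zero $x_*$ of $f$, $\operatorname{ind}(f,x_* )$ is the Brouwer degree $\deg(f,U,0)$ for any bounded open neighborhood $U$ of $x_*$ whose closure contains no other zero of $f$. (A1) Each $J^i(\cdot;y,z^{-i})$ is continuously differentiable. (A2) For all $y$, $F(\cdot;y)$ is $L_F$-Lipschitz on $\hat{\mathcal{Z}}$ and each $h^i(\cdot;y)$ is $L_h$-Lipschitz on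 $\hat{\mathcal{Z}}^i$; some $z\in\hat{\mathcal{Z}}$ has $F(z;\mathcal{Y})$ and all $h^i(z^i;\mathcal{Y})$ bounded. (A3) For every $y$, $F(\cdot;y)$ is monotone on $\hat{\mathcal{Z}}$ and each $h^i(\cdot;y)$ is convex on $\hat{\mathcal{Z}}^i$. *)

theory Defs
  imports "HOL-Probability.Probability" "HOL-Homology.Homology"
begin

text \<open>Players are indexed by a finite type 'N (N = CARD('N)), basis functions by a finite
  type 'd (d = CARD('d)). A profile a in R^(Nd) is an element of real^'d^'N, a$i = a^i.
  A decision profile z is an element of real^'N (each z^i is a scalar).\<close>

definition Phi_vec :: "('d::finite \<Rightarrow> 'x \<Rightarrow> real) \<Rightarrow> 'x \<Rightarrow> real^'d" where
  "Phi_vec \<phi> x = (\<chi> l. \<phi> l x)"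

definition zhat :: "('d::finite \<Rightarrow> 'x \<Rightarrow> real) \<Rightarrow> real^'d \<Rightarrow> 'x \<Rightarrow> real" where
  "zhat \<phi> c x = (\<Sum>l\<in>UNIV. c$l * \<phi> l x)"

definition zvec :: "('d::finite \<Rightarrow> 'x \<Rightarrow> real) \<Rightarrow> real^'d^'N \<Rightarrow> 'x \<Rightarrow> real^'N::finite" where
  "zvec \<phi> a x = (\<chi> i. zhat \<phi> (a$i) x)"

text \<open>z^{-i}: the profile of the other players, encoded as z with the i-th slot set to 0
  (so any function of z^{-i} is a function of this vector and vice versa).\<close>
definition others :: "'N::finite \<Rightarrow> real^'N \<Rightarrow> real^'N" where
  "others i z = (\<chi> j. if j = i then 0 else z$j)"

definition Zhat_i :: "('d::finite \<Rightarrow> 'x \<Rightarrow> real) \<Rightarrow> real \<Rightarrow> 'x set \<Rightarrow> real set" where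
  "Zhat_i \<phi> R Xs = (\<Union>c\<in>cball (0::real^'d) R. (zhat \<phi> c) ` Xs)"

definition Zhat :: "('d::finite \<Rightarrow> 'x \<Rightarrow> real) \<Rightarrow> real \<Rightarrow> 'x set \<Rightarrow> (real^'N::finite) set" where
  "Zhat \<phi> R Xs = {z. \<forall>i. z$i \<in> Zhat_i \<phi> R Xs}"

definition Fgame :: "('N::finite \<Rightarrow> real \<Rightarrow> 'y \<Rightarrow> real^'N \<Rightarrow> real) \<Rightarrow> real^'N \<Rightarrow> 'y \<Rightarrow> real^'N" where
  "Fgame dJ z y = (\<chi> i. dJ i (z$i) y (others i z))"

definition Fvec :: "('N::finite \<Rightarrow> real \<Rightarrow> 'y \<Rightarrow> real^'N \<Rightarrow> real) \<Rightarrow> ('d::finite \<Rightarrow> 'x \<Rightarrow> real)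
    \<Rightarrow> real^'d^'N \<Rightarrow> 'x \<Rightarrow> 'y \<Rightarrow> real^'d^'N" where
  "Fvec dJ \<phi> a x y = (\<chi> i. dJ i (zhat \<phi> (a$i) x) y (others i (zvec \<phi> a x)) *\<^sub>R Phi_vec \<phi> x)"

definition bbF :: "'w measure \<Rightarrow> ('w \<Rightarrow> 'x) \<Rightarrow> ('w \<Rightarrow> 'y)
    \<Rightarrow> ('N::finite \<Rightarrow> real \<Rightarrow> 'y \<Rightarrow> real^'N \<Rightarrow> real) \<Rightarrow> ('d::finite \<Rightarrow> 'x \<Rightarrow> real) \<Rightarrow> real
    \<Rightarrow> real^'d^'N \<Rightarrow> real^'d^'N" where
  "bbF M X Y dJ \<phi> lam a = (\<integral>\<omega>. Fvec dJ \<phi> a (X \<omega>) (Y \<omega>) \<partial>M) + lam *\<^sub>R a"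

definition hbar :: "'w measure \<Rightarrow> ('w \<Rightarrow> 'x) \<Rightarrow> ('w \<Rightarrow> 'y) \<Rightarrow> ('N \<Rightarrow> real \<Rightarrow> 'y \<Rightarrow> real)
    \<Rightarrow> ('d::finite \<Rightarrow> 'x \<Rightarrow> real) \<Rightarrow> 'N \<Rightarrow> real^'d \<Rightarrow> real" where
  "hbar M X Y h \<phi> i c = (\<integral>\<omega>. h i (zhat \<phi> c (X \<omega>)) (Y \<omega>) \<partial>M)"

definition bbA :: "'w measure \<Rightarrow> ('w \<Rightarrow> 'x) \<Rightarrow> ('w \<Rightarrow> 'y) \<Rightarrow> ('N::finite \<Rightarrow> real \<Rightarrow> 'y \<Rightarrow> real)
    \<Rightarrow> ('d::finite \<Rightarrow> 'x \<Rightarrow> real) \<Rightarrow> real \<Rightarrow> (real^'d^'N) set" where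
  "bbA M X Y h \<phi> R = {a. \<forall>i. a$i \<in> cball 0 R \<and> hbar M X Y h \<phi> i (a$i) \<le> 0}"

definition VI_sol :: "'a::real_inner set \<Rightarrow> ('a \<Rightarrow> 'a) \<Rightarrow> 'a \<Rightarrow> bool" where
  "VI_sol K G a \<longleftrightarrow> a \<in> K \<and> (\<forall>b\<in>K. G a \<bullet> (b - a) \<ge> 0)"

text \<open>Euclidean projection P_K is the library's closest_point K.\<close>
definition normal_map :: "'a::euclidean_space set \<Rightarrow> ('a \<Rightarrow> 'a) \<Rightarrow> 'a \<Rightarrow> 'a" where
  "normal_map K G v = G (closest_point K v) + v - closest_point K v"

definition isolated_zero :: "('a::real_normed_vector \<Rightarrow> 'a) \<Rightarrow> 'a \<Rightarrow> bool" where
  "isolated_zero f x0 \<longleftrightarrow> f x0 = 0 \<and> (\<exists>e>0. \<forall>y\<in>cball x0 e. f y = 0 \<longrightarrow> y = x0)"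

text \<open>A fixed enumeration of the orthonormal basis, used to identify 'a with R^m,
  m = DIM('a), and hence the unit sphere of 'a with the library's nsphere (m-1).\<close>
definition coord_basis :: "nat \<Rightarrow> 'a::euclidean_space" where
  "coord_basis = (SOME e. bij_betw e {..<DIM('a)} Basis)"

definition to_coords :: "'a::euclidean_space \<Rightarrow> (nat \<Rightarrow> real)" where
  "to_coords v = (\<lambda>k. if k < DIM('a) then v \<bullet> coord_basis k else 0)"

definition from_coords :: "(nat \<Rightarrow> real) \<Rightarrow> 'a::euclidean_space" where
  "from_coords u = (\<Sum>k<DIM('a). u k *\<^sub>R coord_basis k)"

definition sphere_degree :: "('a::euclidean_space \<Rightarrow> 'a) \<Rightarrow> 'a \<Rightarrow> real \<Rightarrow> int" where
  "sphere_degree f x0 r =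
     Brouwer_degree2 (DIM('a) - 1) (\<lambda>u. to_coords (sgn (f (x0 + r *\<^sub>R from_coords u))))"

text \<open>Index of an isolated zero: deg(f, B(x0,r), 0) for all sufficiently small r, realised
  as the degree of f/|f| on the small spheres around x0.\<close>
definition zero_index :: "('a::euclidean_space \<Rightarrow> 'a) \<Rightarrow> 'a \<Rightarrow> int" where
  "zero_index f x0 = (THE d. \<exists>e>0. \<forall>r. 0 < r \<and> r < e \<longrightarrow> sphere_degree f x0 r = d)"

end

theory Submission
  imports Defs
begin


lemma coord_basis_bij: "bij_betw (coord_basis :: nat \<Rightarrow> 'a::euclidean_space) {..<DIM('a)} Basis"
proof -
  have "\<exists>e. bij_betw e {..<DIM('a)} (Basis::'a set)"
    using ex_bij_betw_nat_finite[of "Basis::'a set"] by (simp add: atLeast0LessThan)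
  then show ?thesis unfolding coord_basis_def by (rule someI_ex)
qed

lemma coord_basis_in: "k < DIM('a) \<Longrightarrow> (coord_basis k :: 'a::euclidean_space) \<in> Basis"
  using coord_basis_bij bij_betwE by blast

lemma coord_basis_inner:
  assumes "k < DIM('a)" "j < DIM('a)"
  shows "(coord_basis k :: 'a::euclidean_space) \<bullet> coord_basis j = (if k = j then 1 else 0)"
proof -
  have "inj_on (coord_basis :: nat \<Rightarrow> 'a) {..<DIM('a)}"
    using coord_basis_bij bij_betw_def by blast
  then show ?thesis using assms coord_basis_in[where 'a='a, OF assms(1)] coord_basis_in[where 'a='a, OF assms(2)]
    by (auto simp: inner_Basis inj_on_def)
qed

lemma sum_coord_basis:
  "(\<Sum>k<DIM('a). g (coord_basis k :: 'a::euclidean_space)) = (\<Sum>b\<in>Basis. g b)"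
  using sum.reindex_bij_betw[OF coord_basis_bij, of g] .

lemma from_to_coords: "from_coords (to_coords v) = (v::'a::euclidean_space)"
proof -
  have "from_coords (to_coords v) = (\<Sum>k<DIM('a). (v \<bullet> coord_basis k) *\<^sub>R (coord_basis k :: 'a))"
    unfolding from_coords_def to_coords_def by (rule sum.cong) auto
  also have "\<dots> = (\<Sum>b\<in>Basis. (v \<bullet> b) *\<^sub>R b)"
    using sum_coord_basis[of "\<lambda>b. (v \<bullet> b) *\<^sub>R b"] .
  also have "\<dots> = v" by (rule euclidean_representation)
  finally show ?thesis .
qed

lemma inner_from_coords:
  assumes "j < DIM('a)"
  shows "(from_coords u :: 'a::euclidean_space) \<bullet> coord_basis j = u j"
proof -
  have "(from_coords u :: 'a) \<bullet> coord_basis j = (\<Sum>k<DIM('a). u k * (coord_basis k \<bullet> (coord_basis j :: 'a)))"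
    unfolding from_coords_def by (simp add: inner_sum_left)
  also have "\<dots> = (\<Sum>k<DIM('a). if k = j then u k else 0)"
    by (rule sum.cong) (auto simp: coord_basis_inner assms)
  also have "\<dots> = u j" using assms by simp
  finally show ?thesis .
qed

lemma to_from_coords:
  assumes "\<And>k. k \<ge> DIM('a) \<Longrightarrow> u k = 0"
  shows "to_coords (from_coords u :: 'a::euclidean_space) = u"
  using assms inner_from_coords[where 'a='a] unfolding to_coords_def
  by (auto simp: fun_eq_iff not_less)

lemma sum_sq_to_coords: "(\<Sum>k<DIM('a). (to_coords (v::'a::euclidean_space) k)^2) = (norm v)^2"
proof -
  have "(\<Sum>k<DIM('a). (to_coords v k)^2) = (\<Sum>k<DIM('a). (v \<bullet> coord_basis k)^2)"
    unfolding to_coords_def by (rule sum.cong) auto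
  also have "\<dots> = (\<Sum>b\<in>Basis. (v \<bullet> b)^2)"
    using sum_coord_basis[of "\<lambda>b. (v \<bullet> b)^2"] .
  also have "\<dots> = v \<bullet> v" using euclidean_inner[of v v] by (simp only: power2_eq_square)
  finally show ?thesis by (simp only: power2_norm_eq_inner)
qed
lemma nsphere_DIM:
  "topspace (nsphere (DIM('a::euclidean_space) - 1)) =
     {u. (\<Sum>k<DIM('a). (u k)^2) = 1 \<and> (\<forall>k\<ge>DIM('a). u k = 0)}"
proof -
  obtain n where n: "DIM('a) = Suc n" using DIM_positive[where 'a='a] gr0_conv_Suc by blast
  have e: "{..n} = {..<Suc n}" by (rule lessThan_Suc_atMost[symmetric])
  have dk: "\<And>k. (n < k) = (Suc n \<le> k)" by auto
  have s: "{x. (\<Sum>i\<le>n. (x i)^2) = (1::real) \<and> (\<forall>i>n. x i = 0)}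
      = {u. (\<Sum>k<Suc n. (u k)^2) = 1 \<and> (\<forall>k\<ge>Suc n. u k = 0)}"
    unfolding e dk by blast
  have "topspace (nsphere n) = {u. (\<Sum>k<Suc n. (u k)^2) = 1 \<and> (\<forall>k\<ge>Suc n. u k = 0)}"
    unfolding nsphere s by simp
  then show ?thesis unfolding n by simp
qed

lemma to_coords_in_nsphere:
  assumes "norm (v::'a::euclidean_space) = 1"
  shows "to_coords v \<in> topspace (nsphere (DIM('a) - 1))"
proof -
  have "\<forall>k\<ge>DIM('a). to_coords v k = 0" by (simp add: to_coords_def)
  moreover have "(\<Sum>k<DIM('a). (to_coords v k)^2) = 1" using sum_sq_to_coords[of v] assms by simp
  ultimately show ?thesis unfolding nsphere_DIM by blast
qed

lemma norm_from_coords: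
  assumes "u \<in> topspace (nsphere (DIM('a::euclidean_space) - 1))"
  shows "norm (from_coords u :: 'a) = 1"
proof -
  have u: "\<And>k. k \<ge> DIM('a) \<Longrightarrow> u k = 0" "(\<Sum>k<DIM('a). (u k)^2) = 1"
    using assms unfolding nsphere_DIM by blast+
  have tf: "to_coords (from_coords u :: 'a) = u" by (rule to_from_coords) (rule u(1))
  have "(norm (from_coords u :: 'a))^2 = 1"
    using sum_sq_to_coords[of "from_coords u :: 'a"] u(2) unfolding tf by simp
  then show ?thesis using norm_ge_zero[of "from_coords u :: 'a"] by (simp add: power2_eq_1_iff)
qed

lemma continuous_map_to_coords:
  "continuous_map euclidean (powertop_real UNIV) (to_coords :: 'a::euclidean_space \<Rightarrow> _)"
  unfolding continuous_map_componentwise_UNIV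
proof
  fix k
  show "continuous_map euclidean euclideanreal (\<lambda>x::'a. to_coords x k)"
    unfolding to_coords_def by (cases "k < DIM('a)") (auto intro: continuous_intros)
qed

lemma continuous_map_from_coords:
  "continuous_map (nsphere p) euclidean (from_coords :: _ \<Rightarrow> 'a::euclidean_space)"
  unfolding from_coords_def
proof (intro continuous_map_sum, simp)
  fix k
  have "continuous_map (nsphere p) euclidean ((\<lambda>s. s *\<^sub>R (coord_basis k :: 'a)) \<circ> (\<lambda>u. u k))"
    by (rule continuous_map_compose[OF continuous_map_nsphere_projection])
       (simp add: continuous_on_scaleR continuous_on_id continuous_on_const)
  then show "continuous_map (nsphere p) euclidean (\<lambda>u. u k *\<^sub>R (coord_basis k :: 'a))"
    by (simp add: o_def)
qed


lemma sphere_degree_one: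
  fixes N :: "'a::euclidean_space \<Rightarrow> 'a" and x0 :: 'a
  assumes contN: "continuous_on UNIV N"
    and nz: "\<And>t v. t \<in> {0..1} \<Longrightarrow> v \<noteq> x0 \<Longrightarrow> t *\<^sub>R N v + (1 - t) *\<^sub>R (v - x0) \<noteq> 0"
    and r: "r > 0"
  shows "sphere_degree N x0 r = 1"
proof -
  define p where "p = DIM('a) - 1"
  define Q where "Q = prod_topology (top_of_set {0..1::real}) (nsphere p)"
  define g1 where "g1 = (\<lambda>x::real \<times> (nat \<Rightarrow> real). (fst x, from_coords (snd x) :: 'a))"
  define g2 where "g2 = (\<lambda>y::real \<times> 'a. sgn (fst y *\<^sub>R N (x0 + r *\<^sub>R snd y) + (1 - fst y) *\<^sub>R (r *\<^sub>R snd y)))"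
  define S where "S = {0..1::real} \<times> sphere (0::'a) 1"
  define H where "H = to_coords \<circ> g2 \<circ> g1"
  have g1c: "continuous_map Q euclidean g1"
  proof -
    have "continuous_map Q (prod_topology euclideanreal euclidean) g1"
      unfolding g1_def Q_def
    proof (rule continuous_map_pairedI)
      show "continuous_map (prod_topology (top_of_set {0..1}) (nsphere p)) euclideanreal fst"
        by (rule continuous_map_into_fulltopology[OF continuous_map_fst])
      show "continuous_map (prod_topology (top_of_set {0..1}) (nsphere p)) euclidean (\<lambda>x. from_coords (snd x) :: 'a)"
        using continuous_map_compose[OF continuous_map_snd continuous_map_from_coords] by (simp add: o_def)
    qed
    then show ?thesis by simp
  qed
  have g1S: "g1 \<in> topspace Q \<rightarrow> S"
    using norm_from_coords[where 'a='a] unfolding Q_def g1_def S_def p_def by auto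
  have g2c: "continuous_on S g2"
    unfolding g2_def
  proof (rule continuous_on_sgn)
    have "continuous_on S (\<lambda>y. N (x0 + r *\<^sub>R snd y))"
      by (rule continuous_on_compose2[OF contN]) (auto intro!: continuous_intros)
    then show "continuous_on S (\<lambda>y. fst y *\<^sub>R N (x0 + r *\<^sub>R snd y) + (1 - fst y) *\<^sub>R (r *\<^sub>R snd y))"
      by (auto intro!: continuous_intros)
    show "\<forall>y\<in>S. fst y *\<^sub>R N (x0 + r *\<^sub>R snd y) + (1 - fst y) *\<^sub>R (r *\<^sub>R snd y) \<noteq> 0"
    proof
      fix y assume y: "y \<in> S"
      then have "fst y \<in> {0..1}" "x0 + r *\<^sub>R snd y \<noteq> x0" using r unfolding S_def by auto
      from nz[OF this] show "fst y *\<^sub>R N (x0 + r *\<^sub>R snd y) + (1 - fst y) *\<^sub>R (r *\<^sub>R snd y) \<noteq> 0"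
        by simp
    qed
  qed
  have g21c: "continuous_map Q euclidean (g2 \<circ> g1)"
    using continuous_map_compose[OF continuous_map_into_subtopology[OF g1c g1S], of euclidean g2] g2c
    by (simp add: continuous_map_iff_continuous)
  have g21S: "g2 \<circ> g1 \<in> topspace Q \<rightarrow> sphere 0 1"
  proof
    fix x assume "x \<in> topspace Q"
    then have "g1 x \<in> S" using g1S by auto
    then have "x0 + r *\<^sub>R snd (g1 x) \<noteq> x0" "fst (g1 x) \<in> {0..1}" using r unfolding S_def by auto
    from nz[OF this(2) this(1)] show "(g2 \<circ> g1) x \<in> sphere 0 1"
      unfolding g2_def by (simp add: norm_sgn)
  qed
  have ns: "nsphere p = subtopology (powertop_real UNIV) (topspace (nsphere p))"
    unfolding nsphere by simp
  have Hc: "continuous_map Q (nsphere p) H"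
  proof -
    have "continuous_map Q (powertop_real UNIV) H"
      unfolding H_def o_assoc[symmetric] by (rule continuous_map_compose[OF g21c continuous_map_to_coords])
    moreover have "H \<in> topspace Q \<rightarrow> topspace (nsphere p)"
      using g21S to_coords_in_nsphere[where 'a='a] unfolding H_def p_def by fastforce
    ultimately show ?thesis
      by (subst ns) (rule continuous_map_into_subtopology)
  qed
  have hom: "homotopic_with (\<lambda>x. True) (nsphere p) (nsphere p) (\<lambda>u. H (0, u)) (\<lambda>u. H (1, u))"
    unfolding homotopic_with_def using Hc unfolding Q_def by blast
  have H1: "(\<lambda>u. H (1, u)) = (\<lambda>u. to_coords (sgn (N (x0 + r *\<^sub>R from_coords u))))"
    unfolding H_def g1_def g2_def by simp
  have H0: "H (0, u) = id u" if "u \<in> topspace (nsphere p)" for u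
  proof -
    have n1: "norm (from_coords u :: 'a) = 1" using norm_from_coords[where 'a='a] that unfolding p_def by blast
    have "sgn (r *\<^sub>R (from_coords u :: 'a)) = from_coords u"
      using r n1 by (simp add: sgn_scaleR sgn_div_norm)
    moreover have "to_coords (from_coords u :: 'a) = u"
    proof (rule to_from_coords)
      fix k assume "k \<ge> DIM('a)"
      moreover have "u \<in> {u. (\<Sum>k<DIM('a). (u k)^2) = 1 \<and> (\<forall>k\<ge>DIM('a). u k = 0)}"
        using that unfolding p_def nsphere_DIM .
      ultimately show "u k = 0" by blast
    qed
    ultimately show ?thesis unfolding H_def g1_def g2_def by simp
  qed
  have "Brouwer_degree2 p (\<lambda>u. H (1, u)) = Brouwer_degree2 p (\<lambda>u. H (0, u))"
    using Brouwer_degree2_homotopic[OF hom] by simp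
  also have "\<dots> = Brouwer_degree2 p id"
    by (rule Brouwer_degree2_eq) (rule H0)
  finally show ?thesis unfolding sphere_degree_def H1 p_def by simp
qed

lemma degree_one:
  fixes N :: "'a::euclidean_space \<Rightarrow> 'a" and x0 :: 'a
  assumes contN: "continuous_on UNIV N"
    and zero: "N x0 = 0"
    and nz: "\<And>t v. t \<in> {0..1} \<Longrightarrow> v \<noteq> x0 \<Longrightarrow> t *\<^sub>R N v + (1 - t) *\<^sub>R (v - x0) \<noteq> 0"
  shows "isolated_zero N x0 \<and> zero_index N x0 = 1"
proof
  show "isolated_zero N x0"
    unfolding isolated_zero_def using zero nz[of 1] by (auto intro!: exI[of _ 1])
  have all: "\<And>r. 0 < r \<Longrightarrow> sphere_degree N x0 r = 1"
    using sphere_degree_one[OF contN nz] by blast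
  show "zero_index N x0 = 1"
    unfolding zero_index_def
  proof (rule the_equality)
    show "\<exists>e>0. \<forall>r. 0 < r \<and> r < e \<longrightarrow> sphere_degree N x0 r = 1"
      using all by (auto intro!: exI[of _ 1])
  next
    fix d assume "\<exists>e>0. \<forall>r. 0 < r \<and> r < e \<longrightarrow> sphere_degree N x0 r = d"
    then obtain e where "e > 0" "\<forall>r. 0 < r \<and> r < e \<longrightarrow> sphere_degree N x0 r = d" by blast
    then have "sphere_degree N x0 (e/2) = d" by auto
    then show "d = 1" using all[of "e/2"] \<open>e > 0\<close> by simp
  qed
qed


lemma proj_VI:
  fixes K :: "'a::euclidean_space set"
  assumes K: "closed K" "convex K" and sol: "VI_sol K G a"
  shows "closest_point K (a - G a) = a"
proof -
  have aK: "a \<in> K" and vi: "\<And>b. b \<in> K \<Longrightarrow> G a \<bullet> (b - a) \<ge> 0"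
    using sol unfolding VI_sol_def by auto
  have "a = closest_point K (a - G a)"
  proof (rule closest_point_unique[OF K(2) K(1) aK], rule ballI)
    fix z assume z: "z \<in> K"
    have "(a - G a) - z = - (G a + (z - a))" by (simp add: algebra_simps)
    then have "(dist (a - G a) z)^2 = (norm (G a + (z - a)))^2" by (simp only: dist_norm norm_minus_cancel)
    also have "\<dots> = (norm (G a))^2 + 2 * (G a \<bullet> (z - a)) + (norm (z - a))^2"
      by (simp add: power2_norm_eq_inner inner_add_left inner_add_right inner_commute)
    also have "\<dots> \<ge> (norm (G a))^2" using vi[OF z] by simp
    finally have "(dist (a - G a) a)^2 \<le> (dist (a - G a) z)^2" by (simp add: dist_norm)
    then show "dist (a - G a) a \<le> dist (a - G a) z" by (simp add: power2_le_iff_abs_le)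
  qed
  then show ?thesis by simp
qed

lemma normal_map_VI:
  fixes K :: "'a::euclidean_space set"
  assumes K: "closed K" "convex K" and sol: "VI_sol K G a" and c: "c > 0"
    and mono: "\<And>p q. p \<in> K \<Longrightarrow> q \<in> K \<Longrightarrow> (G p - G q) \<bullet> (p - q) \<ge> c * ((p - q) \<bullet> (p - q))"
  shows "normal_map K G (a - G a) = 0"
    and "\<And>(t::real) v. t \<in> {0..1} \<Longrightarrow> v \<noteq> a - G a \<Longrightarrow> t *\<^sub>R normal_map K G v + (1 - t) *\<^sub>R (v - (a - G a)) \<noteq> 0"
proof -
  have aK: "a \<in> K" and vi: "\<And>b. b \<in> K \<Longrightarrow> G a \<bullet> (b - a) \<ge> 0"
    using sol unfolding VI_sol_def by auto
  have Kne: "K \<noteq> {}" using aK by auto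
  show "normal_map K G (a - G a) = 0"
    unfolding normal_map_def proj_VI[OF K sol] by simp
  fix t :: real and v assume t: "t \<in> {0..1}" and v: "v \<noteq> a - G a"
  show "t *\<^sub>R normal_map K G v + (1 - t) *\<^sub>R (v - (a - G a)) \<noteq> 0"
  proof
    assume eq: "t *\<^sub>R normal_map K G v + (1 - t) *\<^sub>R (v - (a - G a)) = 0"
    define p where "p = closest_point K v"
    have pK: "p \<in> K" unfolding p_def by (rule closest_point_in_set[OF K(1) Kne])
    have pmin: "\<forall>z\<in>K. dist v p \<le> dist v z"
      unfolding p_def using closest_point_exists(2)[OF K(1) Kne] by blast
    define W where "W = t *\<^sub>R G p + (1 - t) *\<^sub>R (p - a + G a)"
    have vW: "v - p = - W"
      using eq unfolding normal_map_def p_def[symmetric] W_def by (simp add: algebra_simps)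
    have "(v - p) \<bullet> (a - p) \<le> 0"
      by (rule any_closest_point_dot[OF K(2) K(1) pK aK pmin])
    moreover have "(v - p) \<bullet> (a - p) = W \<bullet> (p - a)" unfolding vW by (simp add: inner_diff_right)
    ultimately have w1: "W \<bullet> (p - a) \<le> 0" by simp
    have w2: "G a \<bullet> (p - a) \<ge> 0" by (rule vi[OF pK])
    have "W - G a = t *\<^sub>R (G p - G a) + (1 - t) *\<^sub>R (p - a)"
      unfolding W_def by (simp add: algebra_simps)
    then have "(W - G a) \<bullet> (p - a) = t * ((G p - G a) \<bullet> (p - a)) + (1 - t) * ((p - a) \<bullet> (p - a))"
      by (simp add: inner_add_left)
    moreover have "(G p - G a) \<bullet> (p - a) \<ge> c * ((p - a) \<bullet> (p - a))" by (rule mono[OF pK aK])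
    moreover have "t * ((G p - G a) \<bullet> (p - a)) \<ge> t * (c * ((p - a) \<bullet> (p - a)))"
      using t \<open>(G p - G a) \<bullet> (p - a) \<ge> c * ((p - a) \<bullet> (p - a))\<close> by (intro mult_left_mono) auto
    moreover have "(t * c + (1 - t)) * ((p - a) \<bullet> (p - a)) = t * (c * ((p - a) \<bullet> (p - a))) + (1 - t) * ((p - a) \<bullet> (p - a))"
      by (simp add: algebra_simps)
    ultimately have ge: "(W - G a) \<bullet> (p - a) \<ge> (t * c + (1 - t)) * ((p - a) \<bullet> (p - a))"
      by linarith
    have le: "(W - G a) \<bullet> (p - a) \<le> 0" using w1 w2 by (simp add: inner_diff_left)
    have tc0: "t * c \<ge> 0" using t c by simp
    have k: "t * c + (1 - t) > 0"
    proof (cases "t < 1")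
      case True then show ?thesis using tc0 by linarith
    next
      case False then have "t = 1" using t by simp
      then show ?thesis using c by simp
    qed
    have "(t * c + (1 - t)) * ((p - a) \<bullet> (p - a)) \<le> 0" using ge le by linarith
    then have "(p - a) \<bullet> (p - a) \<le> 0" using k by (simp add: mult_le_0_iff)
    then have "(p - a) \<bullet> (p - a) = 0" using inner_ge_zero[of "p - a"] by linarith
    then have pa: "p = a" by simp
    then have "v = a - W" using vW by (simp add: algebra_simps)
    also have "W = G a" unfolding W_def pa by (simp add: algebra_simps)
    finally show False using v by simp
  qed
qed

lemma normal_map_cont:
  fixes K :: "'a::euclidean_space set"
  assumes "closed K" "convex K" "K \<noteq> {}" "continuous_on K G"
  shows "continuous_on UNIV (normal_map K G)"
proof -
  have cp: "continuous_on UNIV (closest_point K)" by (rule continuous_on_closest_point[OF assms(2,1,3)])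
  have "continuous_on UNIV (\<lambda>v. G (closest_point K v))"
    by (rule continuous_on_compose2[OF assms(4) cp]) (auto intro: closest_point_in_set[OF assms(1,3)])
  then show ?thesis unfolding normal_map_def[abs_def]
    by (intro continuous_intros cp) 
qed


lemma norm_vec_scaled:
  fixes s :: "real^'n::finite" and w :: "'b::real_normed_vector"
  shows "norm (\<chi> i. s$i *\<^sub>R w) = norm s * norm w"
proof -
  have "norm (\<chi> i. s$i *\<^sub>R w) = L2_set (\<lambda>i. norm w * norm (s$i)) UNIV"
    unfolding norm_vec_def by (simp add: mult.commute)
  also have "\<dots> = norm w * L2_set (\<lambda>i. norm (s$i)) UNIV"
    by (simp add: L2_set_right_distrib)
  also have "\<dots> = norm s * norm w" unfolding norm_vec_def by simp
  finally show ?thesis .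
qed

lemma zhat_inner: "zhat \<phi> c x = c \<bullet> Phi_vec \<phi> x"
  unfolding zhat_def Phi_vec_def inner_vec_def by simp


lemma inner_vec_scaled:
  fixes s :: "real^'n::finite" and w :: "'b::real_inner" and d :: "'b^'n"
  shows "(\<chi> i. s$i *\<^sub>R w) \<bullet> d = s \<bullet> (\<chi> i. d$i \<bullet> w)"
  unfolding inner_vec_def by (rule sum.cong) (simp_all add: inner_commute)

locale game =
  fixes M :: "'w measure" and X :: "'w \<Rightarrow> 'x::euclidean_space" and Y :: "'w \<Rightarrow> 'y::euclidean_space"
    and Xs :: "'x set" and Ys :: "'y set"
    and \<phi> :: "'d::finite \<Rightarrow> 'x \<Rightarrow> real"
    and dJ :: "'N::finite \<Rightarrow> real \<Rightarrow> 'y \<Rightarrow> real^'N \<Rightarrow> real"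
    and h :: "'N \<Rightarrow> real \<Rightarrow> 'y \<Rightarrow> real"
    and R lam L_F L_h :: real
  assumes prob: "prob_space M"
    and Xs_compact: "compact Xs"
    and X_in: "\<And>\<omega>. \<omega> \<in> space M \<Longrightarrow> X \<omega> \<in> Xs"
    and Y_in: "\<And>\<omega>. \<omega> \<in> space M \<Longrightarrow> Y \<omega> \<in> Ys"
    and \<phi>_cont: "\<And>l. continuous_on Xs (\<phi> l)"
    and R_pos: "R > 0" and lam_pos: "lam > 0"
    and F_meas: "\<And>a. (\<forall>i. a$i \<in> cball 0 R) \<Longrightarrow>
                   (\<lambda>\<omega>. Fvec dJ \<phi> a (X \<omega>) (Y \<omega>)) \<in> borel_measurable M"
    and h_meas: "\<And>i c. c \<in> cball 0 R \<Longrightarrow>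
                   (\<lambda>\<omega>. h i (zhat \<phi> c (X \<omega>)) (Y \<omega>)) \<in> borel_measurable M"
    and A2_F_lip: "\<And>y. y \<in> Ys \<Longrightarrow> lipschitz_on L_F (Zhat \<phi> R Xs) (\<lambda>z. Fgame dJ z y)"
    and A2_h_lip: "\<And>i y. y \<in> Ys \<Longrightarrow> lipschitz_on L_h (Zhat_i \<phi> R Xs) (\<lambda>w. h i w y)"
    and A2_bdd: "\<exists>z\<in>Zhat \<phi> R Xs. bounded ((\<lambda>y. Fgame dJ z y) ` Ys) \<and>
                   (\<forall>i. bounded ((\<lambda>y. h i (z$i) y) ` Ys))"
    and A3_mono: "\<And>y z z'. y \<in> Ys \<Longrightarrow> z \<in> Zhat \<phi> R Xs \<Longrightarrow> z' \<in> Zhat \<phi> R Xs \<Longrightarrow>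
                   (Fgame dJ z y - Fgame dJ z' y) \<bullet> (z - z') \<ge> 0"
    and A3_convex: "\<And>i y. y \<in> Ys \<Longrightarrow> convex_on (Zhat_i \<phi> R Xs) (\<lambda>w. h i w y)"
begin

definition Cset :: "(real^'d^'N) set" where "Cset = {a. \<forall>i. a$i \<in> cball 0 R}"

lemma Ys_ne: "Ys \<noteq> {}"
  using prob_space.not_empty[OF prob] Y_in by blast

lemma LF_nonneg: "L_F \<ge> 0"
  using Ys_ne A2_F_lip unfolding lipschitz_on_def by blast

lemma Lh_nonneg: "L_h \<ge> 0"
  using Ys_ne A2_h_lip unfolding lipschitz_on_def by blast

lemma Phi_bound: "\<exists>Mp\<ge>0. \<forall>x\<in>Xs. norm (Phi_vec \<phi> x) \<le> Mp"
proof -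
  have "continuous_on Xs (Phi_vec \<phi>)"
    unfolding Phi_vec_def[abs_def] by (intro continuous_on_vec_lambda \<phi>_cont)
  then have "bounded (Phi_vec \<phi> ` Xs)"
    by (intro compact_imp_bounded compact_continuous_image Xs_compact)
  then obtain B where "B > 0" "\<forall>y\<in>Phi_vec \<phi> ` Xs. norm y \<le> B" by (auto simp: bounded_pos)
  then show ?thesis by (intro exI[of _ B]) auto
qed

definition Mp where "Mp = (SOME Mp. Mp \<ge> 0 \<and> (\<forall>x\<in>Xs. norm (Phi_vec \<phi> x) \<le> Mp))"

lemma Mp: "Mp \<ge> 0" "\<And>x. x \<in> Xs \<Longrightarrow> norm (Phi_vec \<phi> x) \<le> Mp"
  using someI_ex[OF Phi_bound] unfolding Mp_def by auto

lemma zhat_bound: "c \<in> cball 0 R \<Longrightarrow> x \<in> Xs \<Longrightarrow> \<bar>zhat \<phi> c x\<bar> \<le> R * Mp"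
proof -
  assume c: "c \<in> cball 0 R" and x: "x \<in> Xs"
  have "\<bar>zhat \<phi> c x\<bar> \<le> norm c * norm (Phi_vec \<phi> x)"
    unfolding zhat_inner by (rule Cauchy_Schwarz_ineq2)
  also have "\<dots> \<le> R * Mp"
    using c Mp x R_pos by (intro mult_mono) auto
  finally show ?thesis .
qed

lemma Zhat_i_bound: "w \<in> Zhat_i \<phi> R Xs \<Longrightarrow> \<bar>w\<bar> \<le> R * Mp"
  unfolding Zhat_i_def using zhat_bound by auto

definition KZ where "KZ = real CARD('N) * (R * Mp)"

lemma Zhat_bound: "(z::real^'N) \<in> Zhat \<phi> R Xs \<Longrightarrow> norm z \<le> KZ"
proof -
  assume z: "z \<in> Zhat \<phi> R Xs"
  have zi: "\<bar>z$i\<bar> \<le> R * Mp" for i using z Zhat_i_bound unfolding Zhat_def by blast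
  have "norm z \<le> (\<Sum>i\<in>UNIV. \<bar>z$i\<bar>)" by (rule norm_le_l1_cart)
  also have "\<dots> \<le> of_nat (card (UNIV::'N set)) * (R * Mp)"
    by (rule sum_bounded_above) (rule zi)
  finally show ?thesis unfolding KZ_def by simp
qed

lemma zvec_in: "a \<in> Cset \<Longrightarrow> x \<in> Xs \<Longrightarrow> zvec \<phi> a x \<in> Zhat \<phi> R Xs"
  unfolding Cset_def Zhat_def Zhat_i_def zvec_def by auto

lemma zhat_in: "c \<in> cball 0 R \<Longrightarrow> x \<in> Xs \<Longrightarrow> zhat \<phi> c x \<in> Zhat_i \<phi> R Xs"
  unfolding Zhat_i_def by auto

lemma Fvec_eq: "Fvec dJ \<phi> a x y = (\<chi> i. (Fgame dJ (zvec \<phi> a x) y)$i *\<^sub>R Phi_vec \<phi> x)"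
  unfolding Fvec_def Fgame_def zvec_def by simp

lemma Fvec_diff: "Fvec dJ \<phi> a x y - Fvec dJ \<phi> b x y
    = (\<chi> i. (Fgame dJ (zvec \<phi> a x) y - Fgame dJ (zvec \<phi> b x) y)$i *\<^sub>R Phi_vec \<phi> x)"
  unfolding Fvec_eq by (simp add: vec_eq_iff scaleR_diff_left)

lemma zvec_diff: "norm (zvec \<phi> a x - zvec \<phi> b x) \<le> norm (a - b) * norm (Phi_vec \<phi> x)"
proof -
  have "norm (zvec \<phi> a x - zvec \<phi> b x) = L2_set (\<lambda>i. \<bar>(a - b)$i \<bullet> Phi_vec \<phi> x\<bar>) UNIV"
    unfolding norm_vec_def zvec_def zhat_inner by (simp add: inner_diff_left)
  also have "\<dots> \<le> L2_set (\<lambda>i. norm (Phi_vec \<phi> x) * norm ((a - b)$i)) UNIV"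
    by (intro L2_set_mono) (simp_all add: Cauchy_Schwarz_ineq2 mult.commute[of "norm (Phi_vec \<phi> x)"])
  also have "\<dots> = norm (Phi_vec \<phi> x) * norm (a - b)"
    unfolding norm_vec_def by (simp add: L2_set_right_distrib)
  finally show ?thesis by (simp add: mult.commute)
qed


sublocale prob_space M by (rule prob)

lemma Fgame_bound_ex: "\<exists>B. \<forall>z\<in>Zhat \<phi> R Xs. \<forall>y\<in>Ys. norm (Fgame dJ z y) \<le> B"
proof -
  obtain z0 where z0: "z0 \<in> Zhat \<phi> R Xs" "bounded ((\<lambda>y. Fgame dJ z0 y) ` Ys)"
    using A2_bdd by blast
  then obtain BF where BF: "\<forall>y\<in>Ys. norm (Fgame dJ z0 y) \<le> BF"
    unfolding bounded_iff by blast
  have "norm (Fgame dJ z y) \<le> BF + L_F * (2 * KZ)" if z: "z \<in> Zhat \<phi> R Xs" and y: "y \<in> Ys" for z y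
  proof -
    have "dist (Fgame dJ z y) (Fgame dJ z0 y) \<le> L_F * dist z z0"
      using A2_F_lip[OF y] z z0(1) unfolding lipschitz_on_def by blast
    also have "\<dots> \<le> L_F * (2 * KZ)"
    proof (rule mult_left_mono[OF _ LF_nonneg])
      have "dist z z0 \<le> norm z + norm z0" by (simp add: dist_norm norm_triangle_ineq4)
      then show "dist z z0 \<le> 2 * KZ" using Zhat_bound[OF z] Zhat_bound[OF z0(1)] by linarith
    qed
    finally have "dist (Fgame dJ z y) (Fgame dJ z0 y) \<le> L_F * (2 * KZ)" .
    moreover have "norm (Fgame dJ z y) \<le> norm (Fgame dJ z0 y) + dist (Fgame dJ z y) (Fgame dJ z0 y)"
      by (metis dist_commute dist_norm norm_triangle_sub add.commute)
    ultimately show ?thesis using BF y by fastforce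
  qed
  then show ?thesis by blast
qed

lemma Fvec_int:
  assumes a: "a \<in> Cset"
  shows "integrable M (\<lambda>\<omega>. Fvec dJ \<phi> a (X \<omega>) (Y \<omega>))"
proof -
  obtain B where B: "\<forall>z\<in>Zhat \<phi> R Xs. \<forall>y\<in>Ys. norm (Fgame dJ z y) \<le> B"
    using Fgame_bound_ex by blast
  have "norm (Fvec dJ \<phi> a (X \<omega>) (Y \<omega>)) \<le> B * Mp" if w: "\<omega> \<in> space M" for \<omega>
  proof -
    have "norm (Fvec dJ \<phi> a (X \<omega>) (Y \<omega>)) = norm (Fgame dJ (zvec \<phi> a (X \<omega>)) (Y \<omega>)) * norm (Phi_vec \<phi> (X \<omega>))"
      unfolding Fvec_eq by (rule norm_vec_scaled)
    also have "\<dots> \<le> B * Mp"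
      using B zvec_in[OF a X_in[OF w]] Y_in[OF w] Mp X_in[OF w]
      by (intro mult_mono) (auto intro: order_trans[OF norm_ge_zero])
    finally show ?thesis .
  qed
  then show ?thesis
    using F_meas a unfolding Cset_def by (intro integrable_const_bound[where B="B * Mp"]) auto
qed

lemma Fvec_diff_bound:
  assumes a: "a \<in> Cset" and b: "b \<in> Cset" and x: "x \<in> Xs" and y: "y \<in> Ys"
  shows "norm (Fvec dJ \<phi> a x y - Fvec dJ \<phi> b x y) \<le> L_F * Mp * Mp * norm (a - b)"
proof -
  have "norm (Fvec dJ \<phi> a x y - Fvec dJ \<phi> b x y)
      = norm (Fgame dJ (zvec \<phi> a x) y - Fgame dJ (zvec \<phi> b x) y) * norm (Phi_vec \<phi> x)"
    unfolding Fvec_diff by (rule norm_vec_scaled)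
  also have "\<dots> \<le> (L_F * (norm (a - b) * Mp)) * Mp"
  proof (rule mult_mono)
    have "dist (Fgame dJ (zvec \<phi> a x) y) (Fgame dJ (zvec \<phi> b x) y) \<le> L_F * dist (zvec \<phi> a x) (zvec \<phi> b x)"
      using A2_F_lip[OF y] zvec_in[OF a x] zvec_in[OF b x] unfolding lipschitz_on_def by blast
    also have "\<dots> \<le> L_F * (norm (a - b) * Mp)"
    proof (rule mult_left_mono[OF _ LF_nonneg])
      have "norm (a - b) * norm (Phi_vec \<phi> x) \<le> norm (a - b) * Mp"
        by (rule mult_left_mono[OF Mp(2)[OF x]]) simp
      then show "dist (zvec \<phi> a x) (zvec \<phi> b x) \<le> norm (a - b) * Mp"
        using zvec_diff[of a x b] unfolding dist_norm by linarith
    qed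
    finally show "norm (Fgame dJ (zvec \<phi> a x) y - Fgame dJ (zvec \<phi> b x) y) \<le> L_F * (norm (a - b) * Mp)"
      by (simp add: dist_norm)
    show "norm (Phi_vec \<phi> x) \<le> Mp" by (rule Mp(2)[OF x])
    show "0 \<le> L_F * (norm (a - b) * Mp)" using LF_nonneg Mp(1) by simp
  qed simp
  finally show ?thesis by (simp add: algebra_simps)
qed

lemma bbF_lip:
  assumes a: "a \<in> Cset" and b: "b \<in> Cset"
  shows "norm (bbF M X Y dJ \<phi> lam a - bbF M X Y dJ \<phi> lam b) \<le> (L_F * Mp * Mp + lam) * norm (a - b)"
proof -
  let ?Fa = "\<lambda>\<omega>. Fvec dJ \<phi> a (X \<omega>) (Y \<omega>)" and ?Fb = "\<lambda>\<omega>. Fvec dJ \<phi> b (X \<omega>) (Y \<omega>)"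
  have ia: "integrable M ?Fa" and ib: "integrable M ?Fb" using Fvec_int a b by auto
  have eq: "bbF M X Y dJ \<phi> lam a - bbF M X Y dJ \<phi> lam b = (\<integral>\<omega>. ?Fa \<omega> - ?Fb \<omega> \<partial>M) + lam *\<^sub>R (a - b)"
    unfolding bbF_def using ia ib by (simp add: algebra_simps)
  have "norm (\<integral>\<omega>. ?Fa \<omega> - ?Fb \<omega> \<partial>M) \<le> (\<integral>\<omega>. norm (?Fa \<omega> - ?Fb \<omega>) \<partial>M)"
    by (rule integral_norm_bound)
  also have "\<dots> \<le> L_F * Mp * Mp * norm (a - b)"
    using ia ib Fvec_diff_bound[OF a b X_in Y_in] by (intro integral_le_const) auto
  finally have "norm (\<integral>\<omega>. ?Fa \<omega> - ?Fb \<omega> \<partial>M) \<le> L_F * Mp * Mp * norm (a - b)" .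
  moreover have "norm (lam *\<^sub>R (a - b)) = lam * norm (a - b)" using lam_pos by simp
  ultimately show ?thesis unfolding eq
    by (smt (verit, best) distrib_right norm_triangle_ineq)
qed

lemma bbF_cont: "continuous_on Cset (bbF M X Y dJ \<phi> lam)"
proof (rule lipschitz_on_continuous_on)
  show "(L_F * Mp * Mp + lam)-lipschitz_on Cset (bbF M X Y dJ \<phi> lam)"
    unfolding lipschitz_on_def dist_norm using bbF_lip LF_nonneg Mp(1) lam_pos by auto
qed

lemma bbF_mono:
  assumes a: "a \<in> Cset" and b: "b \<in> Cset"
  shows "(bbF M X Y dJ \<phi> lam a - bbF M X Y dJ \<phi> lam b) \<bullet> (a - b) \<ge> lam * ((a - b) \<bullet> (a - b))"
proof -
  let ?Fa = "\<lambda>\<omega>. Fvec dJ \<phi> a (X \<omega>) (Y \<omega>)" and ?Fb = "\<lambda>\<omega>. Fvec dJ \<phi> b (X \<omega>) (Y \<omega>)"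
  have ia: "integrable M ?Fa" and ib: "integrable M ?Fb" using Fvec_int a b by auto
  have eq: "bbF M X Y dJ \<phi> lam a - bbF M X Y dJ \<phi> lam b = (\<integral>\<omega>. ?Fa \<omega> - ?Fb \<omega> \<partial>M) + lam *\<^sub>R (a - b)"
    unfolding bbF_def using ia ib by (simp add: algebra_simps)
  have "(\<integral>\<omega>. ?Fa \<omega> - ?Fb \<omega> \<partial>M) \<bullet> (a - b) = (\<integral>\<omega>. (?Fa \<omega> - ?Fb \<omega>) \<bullet> (a - b) \<partial>M)"
    using integral_bounded_linear[OF bounded_linear_inner_left[of "a - b"], of M "\<lambda>\<omega>. ?Fa \<omega> - ?Fb \<omega>"] ia ib
    by simp
  also have "\<dots> \<ge> 0"
  proof (rule Bochner_Integration.integral_nonneg)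
    fix \<omega> assume w: "\<omega> \<in> space M"
    let ?za = "zvec \<phi> a (X \<omega>)" and ?zb = "zvec \<phi> b (X \<omega>)"
    have zd: "?za - ?zb = (\<chi> i. (a - b)$i \<bullet> Phi_vec \<phi> (X \<omega>))"
      unfolding zvec_def zhat_inner by (simp add: vec_eq_iff inner_diff_left)
    have "(?Fa \<omega> - ?Fb \<omega>) \<bullet> (a - b) = (Fgame dJ ?za (Y \<omega>) - Fgame dJ ?zb (Y \<omega>)) \<bullet> (?za - ?zb)"
      unfolding Fvec_diff zd by (rule inner_vec_scaled)
    also have "\<dots> \<ge> 0"
      using A3_mono[OF Y_in[OF w] zvec_in[OF a X_in[OF w]] zvec_in[OF b X_in[OF w]]] .
    finally show "0 \<le> (?Fa \<omega> - ?Fb \<omega>) \<bullet> (a - b)" by simp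
  qed
  finally have "(\<integral>\<omega>. ?Fa \<omega> - ?Fb \<omega> \<partial>M) \<bullet> (a - b) \<ge> 0" .
  then show ?thesis unfolding eq by (simp add: inner_add_left)
qed


lemma h_bound_ex: "\<exists>B. \<forall>w\<in>Zhat_i \<phi> R Xs. \<forall>y\<in>Ys. \<bar>h i w y\<bar> \<le> B"
proof -
  obtain z0 :: "real^'N" where z0: "z0 \<in> Zhat \<phi> R Xs" "\<forall>i. bounded ((\<lambda>y. h i (z0$i) y) ` Ys)"
    using A2_bdd by blast
  then obtain Bh where Bh: "\<forall>y\<in>Ys. \<bar>h i (z0$i) y\<bar> \<le> Bh"
    unfolding bounded_iff by force
  have z0i: "z0$i \<in> Zhat_i \<phi> R Xs" using z0(1) unfolding Zhat_def by blast
  have "\<bar>h i w y\<bar> \<le> Bh + L_h * (2 * (R * Mp))" if w: "w \<in> Zhat_i \<phi> R Xs" and y: "y \<in> Ys" for w y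
  proof -
    have "dist (h i w y) (h i (z0$i) y) \<le> L_h * dist w (z0$i)"
      using A2_h_lip[OF y] w z0i unfolding lipschitz_on_def by blast
    also have "\<dots> \<le> L_h * (2 * (R * Mp))"
    proof (rule mult_left_mono[OF _ Lh_nonneg])
      show "dist w (z0$i) \<le> 2 * (R * Mp)"
        using Zhat_i_bound[OF w] Zhat_i_bound[OF z0i] unfolding dist_real_def by linarith
    qed
    finally show ?thesis using Bh y unfolding dist_real_def by fastforce
  qed
  then show ?thesis by blast
qed

lemma h_int:
  assumes c: "c \<in> cball 0 R"
  shows "integrable M (\<lambda>\<omega>. h i (zhat \<phi> c (X \<omega>)) (Y \<omega>))"
proof -
  obtain B where B: "\<forall>w\<in>Zhat_i \<phi> R Xs. \<forall>y\<in>Ys. \<bar>h i w y\<bar> \<le> B" using h_bound_ex by blast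
  show ?thesis
    using h_meas[OF c] B zhat_in[OF c X_in] Y_in
    by (intro integrable_const_bound[where B=B]) auto
qed

lemma hbar_lip:
  assumes c: "c \<in> cball 0 R" and c': "c' \<in> cball 0 R"
  shows "\<bar>hbar M X Y h \<phi> i c - hbar M X Y h \<phi> i c'\<bar> \<le> L_h * Mp * norm (c - c')"
proof -
  let ?f = "\<lambda>\<omega>. h i (zhat \<phi> c (X \<omega>)) (Y \<omega>)" and ?g = "\<lambda>\<omega>. h i (zhat \<phi> c' (X \<omega>)) (Y \<omega>)"
  have i1: "integrable M ?f" and i2: "integrable M ?g" using h_int c c' by auto
  have "hbar M X Y h \<phi> i c - hbar M X Y h \<phi> i c' = (\<integral>\<omega>. ?f \<omega> - ?g \<omega> \<partial>M)"
    unfolding hbar_def using i1 i2 by simp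
  also have "\<bar>\<dots>\<bar> \<le> (\<integral>\<omega>. norm (?f \<omega> - ?g \<omega>) \<partial>M)"
    using integral_norm_bound[of M "\<lambda>\<omega>. ?f \<omega> - ?g \<omega>"] by simp
  also have "\<dots> \<le> L_h * Mp * norm (c - c')"
  proof (rule integral_le_const)
    show "integrable M (\<lambda>\<omega>. norm (?f \<omega> - ?g \<omega>))" using i1 i2 by auto
    show "AE \<omega> in M. norm (?f \<omega> - ?g \<omega>) \<le> L_h * Mp * norm (c - c')"
    proof (rule AE_I2)
      fix \<omega> assume w: "\<omega> \<in> space M"
      have "dist (?f \<omega>) (?g \<omega>) \<le> L_h * dist (zhat \<phi> c (X \<omega>)) (zhat \<phi> c' (X \<omega>))"
        using A2_h_lip[OF Y_in[OF w]] zhat_in[OF c X_in[OF w]] zhat_in[OF c' X_in[OF w]]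
        unfolding lipschitz_on_def by blast
      also have "\<dots> \<le> L_h * (Mp * norm (c - c'))"
      proof (rule mult_left_mono[OF _ Lh_nonneg])
        have "dist (zhat \<phi> c (X \<omega>)) (zhat \<phi> c' (X \<omega>)) = \<bar>(c - c') \<bullet> Phi_vec \<phi> (X \<omega>)\<bar>"
          unfolding zhat_inner dist_real_def by (simp add: inner_diff_left)
        also have "\<dots> \<le> norm (c - c') * norm (Phi_vec \<phi> (X \<omega>))" by (rule Cauchy_Schwarz_ineq2)
        also have "\<dots> \<le> norm (c - c') * Mp" by (rule mult_left_mono[OF Mp(2)[OF X_in[OF w]]]) simp
        finally show "dist (zhat \<phi> c (X \<omega>)) (zhat \<phi> c' (X \<omega>)) \<le> Mp * norm (c - c')" by (simp add: mult.commute)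
      qed
      finally show "norm (?f \<omega> - ?g \<omega>) \<le> L_h * Mp * norm (c - c')" by (simp add: dist_norm mult.assoc)
    qed
  qed
  finally show ?thesis .
qed

lemma hbar_cont: "continuous_on (cball 0 R) (hbar M X Y h \<phi> i)"
proof (rule lipschitz_on_continuous_on)
  show "(L_h * Mp)-lipschitz_on (cball 0 R) (hbar M X Y h \<phi> i)"
    unfolding lipschitz_on_def dist_norm real_norm_def using hbar_lip Lh_nonneg Mp(1) by auto
qed

lemma hbar_convex:
  assumes c: "c \<in> cball 0 R" and c': "c' \<in> cball 0 R" and u: "u \<ge> 0" "v \<ge> 0" "u + v = 1"
  shows "hbar M X Y h \<phi> i (u *\<^sub>R c + v *\<^sub>R c') \<le> u * hbar M X Y h \<phi> i c + v * hbar M X Y h \<phi> i c'"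
proof -
  let ?f = "\<lambda>\<omega>. h i (zhat \<phi> c (X \<omega>)) (Y \<omega>)" and ?g = "\<lambda>\<omega>. h i (zhat \<phi> c' (X \<omega>)) (Y \<omega>)"
  have i1: "integrable M ?f" and i2: "integrable M ?g" using h_int c c' by auto
  have cc: "u *\<^sub>R c + v *\<^sub>R c' \<in> cball 0 R"
    using convex_cball[of "0::real^'d" R] c c' u unfolding convex_def by blast
  have "hbar M X Y h \<phi> i (u *\<^sub>R c + v *\<^sub>R c') \<le> (\<integral>\<omega>. u * ?f \<omega> + v * ?g \<omega> \<partial>M)"
    unfolding hbar_def
  proof (rule integral_mono)
    show "integrable M (\<lambda>\<omega>. h i (zhat \<phi> (u *\<^sub>R c + v *\<^sub>R c') (X \<omega>)) (Y \<omega>))" by (rule h_int[OF cc])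
    show "integrable M (\<lambda>\<omega>. u * ?f \<omega> + v * ?g \<omega>)" using i1 i2 by auto
    fix \<omega> assume w: "\<omega> \<in> space M"
    have zz: "zhat \<phi> (u *\<^sub>R c + v *\<^sub>R c') (X \<omega>) = u *\<^sub>R zhat \<phi> c (X \<omega>) + v *\<^sub>R zhat \<phi> c' (X \<omega>)"
      unfolding zhat_inner by (simp add: inner_add_left)
    show "h i (zhat \<phi> (u *\<^sub>R c + v *\<^sub>R c') (X \<omega>)) (Y \<omega>) \<le> u * ?f \<omega> + v * ?g \<omega>"
      unfolding zz using A3_convex[OF Y_in[OF w], of i] zhat_in[OF c X_in[OF w]] zhat_in[OF c' X_in[OF w]] u
      unfolding convex_on_def by blast
  qed
  also have "\<dots> = u * hbar M X Y h \<phi> i c + v * hbar M X Y h \<phi> i c'"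
    unfolding hbar_def using i1 i2 by simp
  finally show ?thesis .
qed

lemma Cset_closed: "closed Cset"
proof -
  have "Cset = {a. \<forall>i. norm (a$i) \<le> R}" unfolding Cset_def by auto
  also have "closed \<dots>"
    by (intro closed_Collect_all closed_Collect_le continuous_intros)
  finally show ?thesis .
qed

lemma bbA_sub: "bbA M X Y h \<phi> R \<subseteq> Cset"
  unfolding bbA_def Cset_def by auto

lemma bbA_closed: "closed (bbA M X Y h \<phi> R)"
proof -
  have "bbA M X Y h \<phi> R = (\<Inter>i. {a \<in> Cset. hbar M X Y h \<phi> i (a$i) \<le> 0})"
    unfolding bbA_def Cset_def by auto
  also have "closed \<dots>"
  proof (rule closed_INT, rule ballI)
    fix i
    have "continuous_on Cset (\<lambda>a. hbar M X Y h \<phi> i (a$i))"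
      by (rule continuous_on_compose2[OF hbar_cont[of i]]) (auto simp: Cset_def intro!: continuous_intros)
    then show "closed {a \<in> Cset. hbar M X Y h \<phi> i (a$i) \<le> 0}"
      using continuous_on_closed_Collect_le[OF _ continuous_on_const Cset_closed, of "\<lambda>a. hbar M X Y h \<phi> i (a$i)" 0]
      by simp
  qed
  finally show ?thesis .
qed

lemma bbA_convex: "convex (bbA M X Y h \<phi> R)"
  unfolding convex_def
proof (intro ballI allI impI)
  fix a b :: "real^'d^'N" and u v :: real
  assume a: "a \<in> bbA M X Y h \<phi> R" and b: "b \<in> bbA M X Y h \<phi> R" and u: "0 \<le> u" and v: "0 \<le> v" "u + v = 1"
  show "u *\<^sub>R a + v *\<^sub>R b \<in> bbA M X Y h \<phi> R"
    unfolding bbA_def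
  proof (intro CollectI allI conjI)
    fix i
    have ai: "a$i \<in> cball 0 R" "hbar M X Y h \<phi> i (a$i) \<le> 0" using a unfolding bbA_def by auto
    have bi: "b$i \<in> cball 0 R" "hbar M X Y h \<phi> i (b$i) \<le> 0" using b unfolding bbA_def by auto
    show "(u *\<^sub>R a + v *\<^sub>R b)$i \<in> cball 0 R"
      using convex_cball[of "0::real^'d" R] ai(1) bi(1) u v unfolding convex_def by simp
    have "hbar M X Y h \<phi> i (u *\<^sub>R a$i + v *\<^sub>R b$i) \<le> u * hbar M X Y h \<phi> i (a$i) + v * hbar M X Y h \<phi> i (b$i)"
      by (rule hbar_convex[OF ai(1) bi(1) u v])
    also have "\<dots> \<le> 0" using ai(2) bi(2) u v by (simp add: add_nonpos_nonpos mult_nonneg_nonpos)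
    finally show "hbar M X Y h \<phi> i ((u *\<^sub>R a + v *\<^sub>R b)$i) \<le> 0" by simp
  qed
qed

end

theorem lemma4:
  fixes M :: "'w measure"
    and X :: "'w \<Rightarrow> 'x::euclidean_space" and Y :: "'w \<Rightarrow> 'y::euclidean_space"
    and Xs :: "'x set" and Ys :: "'y set"
    and \<phi> :: "'d::finite \<Rightarrow> 'x \<Rightarrow> real"
    and J dJ :: "'N::finite \<Rightarrow> real \<Rightarrow> 'y \<Rightarrow> real^'N \<Rightarrow> real"
    and h :: "'N \<Rightarrow> real \<Rightarrow> 'y \<Rightarrow> real"
    and R lam L_F L_h :: real
    and a_star :: "real^'d^'N"
  assumes prob: "prob_space M"
    and X_meas: "X \<in> borel_measurable M" and Y_meas: "Y \<in> borel_measurable M"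
    and Xs_compact: "compact Xs" and Ys_compact: "compact Ys"
    and X_in: "\<And>\<omega>. \<omega> \<in> space M \<Longrightarrow> X \<omega> \<in> Xs"
    and Y_in: "\<And>\<omega>. \<omega> \<in> space M \<Longrightarrow> Y \<omega> \<in> Ys"
    and \<phi>_cont: "\<And>l. continuous_on Xs (\<phi> l)"
    and R_pos: "R > 0" and lam_pos: "lam > 0"
    \<comment> \<open>the expectations defining bbF and hbar are well defined (measurable integrands)\<close>
    and F_meas: "\<And>a. (\<forall>i. a$i \<in> cball 0 R) \<Longrightarrow>
                   (\<lambda>\<omega>. Fvec dJ \<phi> a (X \<omega>) (Y \<omega>)) \<in> borel_measurable M"
    and h_meas: "\<And>i c. c \<in> cball 0 R \<Longrightarrow>
                   (\<lambda>\<omega>. h i (zhat \<phi> c (X \<omega>)) (Y \<omega>)) \<in> borel_measurable M"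
    \<comment> \<open>(A1)\<close>
    and A1_deriv: "\<And>i w y zo. y \<in> Ys \<Longrightarrow> ((\<lambda>v. J i v y zo) has_real_derivative dJ i w y zo) (at w)"
    and A1_cont: "\<And>i y zo. y \<in> Ys \<Longrightarrow> continuous_on UNIV (\<lambda>w. dJ i w y zo)"
    \<comment> \<open>(A2)\<close>
    and A2_F_lip: "\<And>y. y \<in> Ys \<Longrightarrow> lipschitz_on L_F (Zhat \<phi> R Xs) (\<lambda>z. Fgame dJ z y)"
    and A2_h_lip: "\<And>i y. y \<in> Ys \<Longrightarrow> lipschitz_on L_h (Zhat_i \<phi> R Xs) (\<lambda>w. h i w y)"
    and A2_bdd: "\<exists>z\<in>Zhat \<phi> R Xs. bounded ((\<lambda>y. Fgame dJ z y) ` Ys) \<and>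
                   (\<forall>i. bounded ((\<lambda>y. h i (z$i) y) ` Ys))"
    \<comment> \<open>(A3)\<close>
    and A3_mono: "\<And>y z z'. y \<in> Ys \<Longrightarrow> z \<in> Zhat \<phi> R Xs \<Longrightarrow> z' \<in> Zhat \<phi> R Xs \<Longrightarrow>
                   (Fgame dJ z y - Fgame dJ z' y) \<bullet> (z - z') \<ge> 0"
    and A3_convex: "\<And>i y. y \<in> Ys \<Longrightarrow> convex_on (Zhat_i \<phi> R Xs) (\<lambda>w. h i w y)"
    \<comment> \<open>a_star is the unique solution of VI(A, bbF)\<close>
    and a_star_sol: "VI_sol (bbA M X Y h \<phi> R) (bbF M X Y dJ \<phi> lam) a_star"
    and a_star_unique: "\<And>b. VI_sol (bbA M X Y h \<phi> R) (bbF M X Y dJ \<phi> lam) b \<Longrightarrow> b = a_star"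
  shows "isolated_zero (normal_map (bbA M X Y h \<phi> R) (bbF M X Y dJ \<phi> lam))
             (a_star - bbF M X Y dJ \<phi> lam a_star)
       \<and> zero_index (normal_map (bbA M X Y h \<phi> R) (bbF M X Y dJ \<phi> lam))
             (a_star - bbF M X Y dJ \<phi> lam a_star) = 1"
proof -
  interpret g: game M X Y Xs Ys \<phi> dJ h R lam L_F L_h
    by (rule game.intro[OF prob Xs_compact X_in Y_in \<phi>_cont R_pos lam_pos F_meas h_meas A2_F_lip A2_h_lip A2_bdd A3_mono A3_convex])
  let ?K = "bbA M X Y h \<phi> R" and ?G = "bbF M X Y dJ \<phi> lam"
  have Kc: "closed ?K" by (rule g.bbA_closed)
  have Kv: "convex ?K" by (rule g.bbA_convex)
  have mono: "\<And>p q. p \<in> ?K \<Longrightarrow> q \<in> ?K \<Longrightarrow> (?G p - ?G q) \<bullet> (p - q) \<ge> lam * ((p - q) \<bullet> (p - q))"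
    using g.bbF_mono g.bbA_sub by blast
  have contG: "continuous_on ?K ?G" by (rule continuous_on_subset[OF g.bbF_cont g.bbA_sub])
  have Kne: "?K \<noteq> {}" using a_star_sol unfolding VI_sol_def by auto
  note nm = normal_map_VI[OF Kc Kv a_star_sol lam_pos mono]
  show ?thesis
    by (rule degree_one[OF normal_map_cont[OF Kc Kv Kne contG] nm(1) nm(2)])
qed

end
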